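(* Let $\mathcal N$ and $\mathcal M$ be quantum channels satisfying $s$-detailed balance with respect to $\rho_\beta$, with $\mathcal N$ having $\rho_\beta$ as unique fixed state and spectrum in $[0,1]$. Let $\{Y_i\}_i$, $\lambda_i$, $\alpha_{ij}$ and $\mathrm{SC}$ be as defined in the context. If the map $\widehat{\mathcal M}$ satisfies $s$-detailed balance with respect to $\rho_\beta$, then $\mathrm{SC}\le\mathrm{Cov}_{\rho_\beta}(\mathcal M)$.
   Context: $H$ is an $n$-qubit Hermitian operator, $\beta>0$, $\rho_\beta=e^{-\beta H}/\operatorname{tr}(e^{-\beta H})$. $\mathcal T^\dagger$ denotes the Hilbert–Schmidt adjoint of a linear map $\mathcal T$ (for a channel with Kraus operators $K_u$, $\mathcal T^\dagger(X)=\sum_uK_u^\dagger XK_u$). $\langle A,B\rangle_s=\operatorname{tr}(A^\dagger\rho_\beta^{1-s}B\rho_\beta^s)$; a linear map $\mathcal T$ satisfies $s$-detailed balance if $\langle A,\mathcal T^\dagger(B)\rangle_s=\langle\mathcal T^\dagger(A),B\rangle_s$ for all $A,B$. $\mathcal M$ has Kraus operators $\{O_u\}_u$ indexed by finitely many real outcomes $u$; $\mathbb E_{\rho_\beta}(\mathcal M)=\sum_uu\operatorname{tr}(O_u\rho_\beta O_u^\dagger)$, $\mathrm{Cov}_{\rho_\beta}(\mathcal M)=\sum_{x,y}(x-\mathbb E_{\rho_\beta}(\mathcal M))(y-\mathbb E_{\rho_\beta}(\mathcal M))\operatorname{tr}(O_yO_x\rho_\beta O_x^\dagger O_y^\dagger)$,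 $\widehat{\mathcal M}(X)=\sum_u(u-\mathbb E_{\rho_\beta}(\mathcal M))O_uXO_u^\dagger$. Let $\mathcal E=\mathcal M\circ\mathcal N\circ\mathcal M$ and $\widehat{\mathcal E}=\mathcal M\circ\mathcal N\circ\widehat{\mathcal M}$. Let $\{Y_i\}_i$ be a basis of the $2^n\times2^n$ matrices, orthonormal w.r.t. $\langle\cdot,\cdot\rangle_s$, consisting of eigenvectors $\mathcal E^\dagger(Y_i)=\lambda_iY_i$ with $1=\lambda_1>\lambda_2\ge\lambda_3\ge\dots\ge0$ and $Y_1=I$. Define $\alpha_{ij}=\langle Y_j,\widehat{\mathcal E}^\dagger(Y_i)\rangle_s$ and the spectral covariance weight $\mathrm{SC}=\sum_j|\alpha_{1j}\alpha_{j1}|$. *)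

theory Defs
  imports "HOL-Analysis.Analysis"
begin

type_synonym 'd cmat = "complex^'d^'d"

definition cadj :: "'d::finite cmat \<Rightarrow> 'd cmat" where
  "cadj A = (\<chi> i j. cnj (A $ j $ i))"

definition cscale :: "complex \<Rightarrow> 'd::finite cmat \<Rightarrow> 'd cmat" where
  "cscale c A = (\<chi> i j. c * A $ i $ j)"

definition diagm :: "('d::finite \<Rightarrow> complex) \<Rightarrow> 'd cmat" where
  "diagm f = (\<chi> i j. if i = j then f i else 0)"

definition hermitian :: "'d::finite cmat \<Rightarrow> bool" where
  "hermitian A \<longleftrightarrow> cadj A = A"

definition qunitary :: "'d::finite cmat \<Rightarrow> bool" where
  "qunitary U \<longleftrightarrow> cadj U ** U = mat 1"

text \<open>Functional calculus for Hermitian matrices via a spectral decomposition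
  A = U diag(D) U^dagger (well defined, independent of the chosen decomposition).\<close>

definition hfun :: "(real \<Rightarrow> real) \<Rightarrow> 'd::finite cmat \<Rightarrow> 'd cmat" where
  "hfun f A = (case (SOME p. qunitary (fst p) \<and>
                  A = fst p ** diagm (\<lambda>i. complex_of_real (snd p i)) ** cadj (fst p)) of
     (U, D) \<Rightarrow> U ** diagm (\<lambda>i. complex_of_real (f (D i))) ** cadj U)"

definition gibbs :: "real \<Rightarrow> 'd::finite cmat \<Rightarrow> 'd cmat" where
  "gibbs \<beta> H = (let E = hfun (\<lambda>x. exp (- \<beta> * x)) H in cscale (inverse (trace E)) E)"

definition mpowr :: "'d::finite cmat \<Rightarrow> real \<Rightarrow> 'd cmat" where
  "mpowr \<rho> t = hfun (\<lambda>x. x powr t) \<rho>"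

definition sinner :: "real \<Rightarrow> 'd::finite cmat \<Rightarrow> 'd cmat \<Rightarrow> 'd cmat \<Rightarrow> complex" where
  "sinner s \<rho> A B = trace (cadj A ** mpowr \<rho> (1 - s) ** B ** mpowr \<rho> s)"

text \<open>s-detailed balance of a linear map T, given through its Hilbert-Schmidt adjoint Tdag.\<close>

definition detailed_balance :: "real \<Rightarrow> 'd::finite cmat \<Rightarrow> ('d cmat \<Rightarrow> 'd cmat) \<Rightarrow> bool" where
  "detailed_balance s \<rho> Tdag \<longleftrightarrow>
     (\<forall>A B. sinner s \<rho> A (Tdag B) = sinner s \<rho> (Tdag A) B)"

definition wkraus :: "('u \<Rightarrow> real) \<Rightarrow> ('u \<Rightarrow> 'd::finite cmat) \<Rightarrow> 'u set \<Rightarrow> 'd cmat \<Rightarrow> 'd cmat" where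
  "wkraus c K I X = (\<Sum>u\<in>I. cscale (complex_of_real (c u)) (K u ** X ** cadj (K u)))"

definition wkraus_adj :: "('u \<Rightarrow> real) \<Rightarrow> ('u \<Rightarrow> 'd::finite cmat) \<Rightarrow> 'u set \<Rightarrow> 'd cmat \<Rightarrow> 'd cmat" where
  "wkraus_adj c K I X = (\<Sum>u\<in>I. cscale (complex_of_real (c u)) (cadj (K u) ** X ** K u))"

abbreviation kraus :: "('u \<Rightarrow> 'd::finite cmat) \<Rightarrow> 'u set \<Rightarrow> 'd cmat \<Rightarrow> 'd cmat" where
  "kraus K I \<equiv> wkraus (\<lambda>_. 1) K I"

abbreviation kraus_adj :: "('u \<Rightarrow> 'd::finite cmat) \<Rightarrow> 'u set \<Rightarrow> 'd cmat \<Rightarrow> 'd cmat" where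
  "kraus_adj K I \<equiv> wkraus_adj (\<lambda>_. 1) K I"

definition is_channel :: "('u \<Rightarrow> 'd::finite cmat) \<Rightarrow> 'u set \<Rightarrow> bool" where
  "is_channel K I \<longleftrightarrow> finite I \<and> (\<Sum>u\<in>I. cadj (K u) ** K u) = mat 1"

definition psd :: "'d::finite cmat \<Rightarrow> bool" where
  "psd A \<longleftrightarrow> hermitian A \<and> (\<forall>v. 0 \<le> Re ((\<Sum>i\<in>UNIV. cnj (v $ i) * (A *v v) $ i)))"

definition density :: "'d::finite cmat \<Rightarrow> bool" where
  "density A \<longleftrightarrow> psd A \<and> trace A = 1"

definition expM :: "'d::finite cmat \<Rightarrow> (real \<Rightarrow> 'd cmat) \<Rightarrow> real set \<Rightarrow> real" where
  "expM \<rho> Ob U = Re (\<Sum>u\<in>U. complex_of_real u * trace (Ob u ** \<rho> ** cadj (Ob u)))"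

definition covM :: "'d::finite cmat \<Rightarrow> (real \<Rightarrow> 'd cmat) \<Rightarrow> real set \<Rightarrow> complex" where
  "covM \<rho> Ob U = (\<Sum>x\<in>U. \<Sum>y\<in>U.
      complex_of_real ((x - expM \<rho> Ob U) * (y - expM \<rho> Ob U)) *
      trace (Ob y ** Ob x ** \<rho> ** cadj (Ob x) ** cadj (Ob y)))"

definition Mhat :: "'d::finite cmat \<Rightarrow> (real \<Rightarrow> 'd cmat) \<Rightarrow> real set \<Rightarrow> 'd cmat \<Rightarrow> 'd cmat" where
  "Mhat \<rho> Ob U = wkraus (\<lambda>u. u - expM \<rho> Ob U) Ob U"

definition Mhat_adj :: "'d::finite cmat \<Rightarrow> (real \<Rightarrow> 'd cmat) \<Rightarrow> real set \<Rightarrow> 'd cmat \<Rightarrow> 'd cmat" where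
  "Mhat_adj \<rho> Ob U = wkraus_adj (\<lambda>u. u - expM \<rho> Ob U) Ob U"

end

theory Submission
  imports Defs
begin

lemma quad_nonpos_zero:
  fixes a b :: real
  assumes "\<forall>t. 2 * t * a + t^2 * b \<le> 0" and "a \<ge> 0"
  shows "a = 0"
proof (rule ccontr)
  assume "a \<noteq> 0"
  hence ap: "a > 0" using assms by auto
  define t where "t = a / (\<bar>b\<bar> + 1)"
  have tp: "t > 0" using ap by (simp add: t_def add_pos_nonneg)
  have "t * (\<bar>b\<bar> + 1) = a" unfolding t_def by (simp add: add_pos_nonneg)
  hence "t * \<bar>b\<bar> + t = a" by (simp add: distrib_left)
  hence "t * \<bar>b\<bar> < a" using tp by linarith
  hence "t * t * \<bar>b\<bar> < t * a" using tp by (simp add: mult.assoc)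
  moreover have "t*t*b \<ge> t*t*(-\<bar>b\<bar>)" by (rule mult_left_mono) auto
  hence "t^2 * b \<ge> - (t*t*\<bar>b\<bar>)" by (simp add: power2_eq_square)
  moreover have "t * a > 0" using tp ap by simp
  ultimately have "2 * t * a + t^2 * b > 0" using \<open>t * t * \<bar>b\<bar> < t * a\<close> by linarith
  thus False using assms(1) by (meson not_le)
qed

lemma rayleigh:
  fixes T :: "'v::euclidean_space \<Rightarrow> 'v" and g :: "'v \<Rightarrow> 'v \<Rightarrow> real"
  assumes bil: "bilinear g" and sym: "\<And>x y. g x y = g y x" and pos: "\<And>x. x \<noteq> 0 \<Longrightarrow> g x x > 0"
    and lin: "linear T" and sa: "\<And>x y. g x (T y) = g (T x) y"
    and S: "subspace S" and inv: "\<And>x. x\<in>S \<Longrightarrow> T x \<in> S" and ne: "\<exists>y\<in>S. y \<noteq> 0"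
  shows "\<exists>x m. x \<in> S \<and> x \<noteq> 0 \<and> T x = m *\<^sub>R x \<and> (\<forall>z\<in>S. g z (T z) \<le> m * g z z)"
proof -
  define K where "K = S \<inter> sphere 0 1"
  have cK: "compact K" unfolding K_def
    using S closed_subspace compact_sphere by (metis Int_commute compact_Int_closed)
  obtain y where y: "y \<in> S" "y \<noteq> 0" using ne by blast
  have "(1 / norm y) *\<^sub>R y \<in> K" unfolding K_def using y S
    by (auto simp: subspace_scale)
  hence Kne: "K \<noteq> {}" by blast
  define h where "h z = g z (T z) / g z z" for z
  have bb: "bounded_bilinear g" using bil bilinear_conv_bounded_bilinear by blast
  have cT: "continuous_on UNIV T" using lin by (simp add: linear_continuous_on linear_conv_bounded_linear)
  have K0: "0 \<notin> K" unfolding K_def by auto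
  have "continuous_on K h" unfolding h_def
  proof (intro continuous_on_divide)
    show "continuous_on K (\<lambda>z. g z (T z))"
      by (rule bounded_bilinear.continuous_on[OF bb]) (auto intro: continuous_on_subset[OF cT] continuous_on_id)
    show "continuous_on K (\<lambda>z. g z z)"
      by (rule bounded_bilinear.continuous_on[OF bb]) (auto intro: continuous_on_id)
    show "\<forall>z\<in>K. g z z \<noteq> 0" using pos K0 by (metis less_irrefl)
  qed
  then obtain x where xK: "x \<in> K" and xmax: "\<forall>z\<in>K. h z \<le> h x"
    using continuous_attains_sup[OF cK Kne] by blast
  define m where "m = h x"
  have xS: "x \<in> S" and x0: "x \<noteq> 0" using xK K0 unfolding K_def by auto
  have gsc: "g (c *\<^sub>R z) (T (c *\<^sub>R z)) = c^2 * g z (T z)" for c z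
    using bilinear_lmul[OF bil] bilinear_rmul[OF bil] linear_cmul[OF lin] by (simp add: power2_eq_square)
  have gsc2: "g (c *\<^sub>R z) (c *\<^sub>R z) = c^2 * g z z" for c z
    using bilinear_lmul[OF bil] bilinear_rmul[OF bil] by (simp add: power2_eq_square)
  have bound: "g z (T z) \<le> m * g z z" if zS: "z \<in> S" for z
  proof (cases "z = 0")
    case True thus ?thesis using bilinear_lzero[OF bil] by simp
  next
    case False
    define c where "c = 1 / norm z"
    have cp: "c > 0" using False by (simp add: c_def)
    have "c *\<^sub>R z \<in> K" unfolding K_def c_def using zS S False by (auto simp: subspace_scale)
    hence "h (c *\<^sub>R z) \<le> m" using xmax m_def by blast
    moreover have "h (c *\<^sub>R z) = h z" unfolding h_def gsc gsc2 using cp by simp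
    ultimately have "h z \<le> m" by simp
    thus ?thesis unfolding h_def using pos[OF False] by (simp add: divide_le_eq)
  qed
  have eqx: "g x (T x) = m * g x x" unfolding m_def h_def using pos[OF x0] by simp
  define w where "w = T x - m *\<^sub>R x"
  have wS: "w \<in> S" unfolding w_def using S xS inv by (simp add: subspace_diff subspace_scale)
  have gw: "g w (T x) - m * g w x = g w w" unfolding w_def
    using bilinear_rsub[OF bil] bilinear_rmul[OF bil] by simp
  have "\<forall>t. 2 * t * g w w + t^2 * (g w (T w) - m * g w w) \<le> 0"
  proof
    fix t :: real
    have zS: "x + t *\<^sub>R w \<in> S" using S xS wS by (simp add: subspace_add subspace_scale)
    have e1: "g (x + t *\<^sub>R w) (T (x + t *\<^sub>R w)) = g x (T x) + t * g x (T w) + t * g w (T x) + t^2 * g w (T w)"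
      using bilinear_ladd[OF bil] bilinear_radd[OF bil] bilinear_lmul[OF bil] bilinear_rmul[OF bil]
        linear_add[OF lin] linear_cmul[OF lin] by (simp add: power2_eq_square algebra_simps)
    have e2: "g (x + t *\<^sub>R w) (x + t *\<^sub>R w) = g x x + 2 * t * g w x + t^2 * g w w"
      using bilinear_ladd[OF bil] bilinear_radd[OF bil] bilinear_lmul[OF bil] bilinear_rmul[OF bil] sym[of x w]
      by (simp add: power2_eq_square algebra_simps)
    have "g x (T w) = g w (T x)" using sa[of x w] sym by metis
    with bound[OF zS] e1 e2 eqx gw show "2 * t * g w w + t^2 * (g w (T w) - m * g w w) \<le> 0"
      by (simp add: algebra_simps)
  qed
  moreover have "g w w \<ge> 0" using pos[of w] by (cases "w = 0") (auto simp: bilinear_lzero[OF bil])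
  ultimately have "g w w = 0" using quad_nonpos_zero by blast
  hence "w = 0" using pos by (metis less_irrefl)
  hence "T x = m *\<^sub>R x" unfolding w_def by simp
  thus ?thesis using xS x0 bound by blast
qed

definition cinner :: "complex^'d::finite \<Rightarrow> complex^'d \<Rightarrow> complex" where
  "cinner v w = (\<Sum>i\<in>UNIV. cnj (v$i) * w$i)"

lemma Re_cinner: "Re (cinner v w) = inner v w"
  by (simp add: cinner_def inner_vec_def inner_complex_def Re_sum)

lemma Im_cinner: "Im (cinner v w) = inner (\<i> *s v) w"
  by (simp add: cinner_def inner_vec_def inner_complex_def Im_sum)

lemma cinner_eq0: "cinner v w = 0 \<longleftrightarrow> inner v w = 0 \<and> inner (\<i> *s v) w = 0"
  by (metis Im_cinner Re_cinner complex_eq_iff zero_complex.simps)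

lemma cinner_add_right: "cinner v (w + z) = cinner v w + cinner v z"
  by (simp add: cinner_def distrib_left sum.distrib)

lemma cinner_scale_right: "cinner v (c *s w) = c * cinner v w"
  by (simp add: cinner_def sum_distrib_left algebra_simps)

lemma vsc: "(r *\<^sub>R w) $ i = complex_of_real r * (w $ i :: complex)"
  by (simp only: vector_scaleR_component) (simp add: scaleR_conv_of_real)

lemma scaleR_vs: "r *\<^sub>R (w::complex^'d::finite) = complex_of_real r *s w"
  unfolding vec_eq_iff by (simp only: vector_scaleR_component vector_smult_component) (simp add: scaleR_conv_of_real)

lemma cinner_scaleR_right: "cinner v (r *\<^sub>R w) = of_real r * cinner v w"
  by (simp only: cinner_def vsc sum_distrib_left) (simp add: algebra_simps)

lemma cinner_scale_left: "cinner (c *s v) w = cnj c * cinner v w"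
  by (simp add: cinner_def sum_distrib_left algebra_simps)

lemma cinner_cnj: "cinner w v = cnj (cinner v w)"
  by (simp add: cinner_def mult.commute)

lemma cinner_self: "cinner x x = complex_of_real ((norm x)^2)"
proof -
  have "(norm x)^2 = (\<Sum>i\<in>UNIV. (norm (x$i))^2)"
    unfolding norm_vec_def L2_set_def by (simp add: sum_nonneg)
  hence "complex_of_real ((norm x)^2) = (\<Sum>i\<in>UNIV. complex_of_real ((norm (x$i))^2))" by simp
  also have "\<dots> = cinner x x" unfolding cinner_def complex_norm_square by (simp add: mult.commute)
  finally show ?thesis by simp
qed

lemma herm_entry: "hermitian H \<Longrightarrow> H$i$j = cnj (H$j$i)"
  unfolding hermitian_def cadj_def by (metis vec_lambda_beta)

lemma herm_entry': "hermitian H \<Longrightarrow> cnj (H$i$j) = H$j$i"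
  using herm_entry by (metis complex_cnj_cnj)

lemma cinner_herm: assumes "hermitian H" shows "cinner x (H *v y) = cinner (H *v x) y"
proof -
  have "cinner x (H *v y) = (\<Sum>i\<in>UNIV. \<Sum>j\<in>UNIV. cnj (x$i) * H$i$j * y$j)"
    by (simp add: cinner_def matrix_vector_mult_def sum_distrib_left mult.assoc)
  also have "\<dots> = (\<Sum>j\<in>UNIV. \<Sum>i\<in>UNIV. cnj (x$i) * H$i$j * y$j)" by (rule sum.swap)
  also have "\<dots> = cinner (H *v x) y"
    by (simp add: cinner_def matrix_vector_mult_def sum_distrib_right herm_entry'[OF assms] sum_distrib_left mult.commute mult.left_commute)
  finally show ?thesis .
qed

lemma mv_linear: "linear (\<lambda>x. (H::complex^'d::finite^'d) *v x)"
proof (rule linearI)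
  show "H *v (b1 + b2) = H *v b1 + H *v b2" for b1 b2 by (rule matrix_vector_right_distrib)
  show "H *v (r *\<^sub>R b) = r *\<^sub>R (H *v b)" for r b
    unfolding vec_eq_iff by (simp add: matrix_vector_mult_def vsc scaleR_sum_right)
qed

lemma herm_sa: assumes "hermitian H" shows "inner x (H *v y) = inner (H *v x) y"
  using cinner_herm[OF assms] Re_cinner by metis

lemma hermitian_eigvecs:
  fixes H :: "complex^'d::finite^'d" and F :: "'d set"
  assumes h: "hermitian H" and fin: "finite F"
  shows "\<exists>v m. \<forall>j\<in>F. H *v v j = complex_of_real (m j) *s v j \<and>
                (\<forall>k\<in>F. cinner (v j) (v k) = (if j = k then 1 else 0))"
  using fin
proof (induction F rule: finite_induct)
  case empty
  then show ?case by simp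
next
  case (insert a F)
  then obtain v m where vm: "\<forall>j\<in>F. H *v v j = complex_of_real (m j) *s v j \<and>
                (\<forall>k\<in>F. cinner (v j) (v k) = (if j = k then 1 else 0))" by blast
  define S where "S = {z. \<forall>j\<in>F. cinner (v j) z = 0}"
  have sub: "subspace S" unfolding S_def subspace_def
    by (auto simp: cinner_add_right cinner_scaleR_right) (simp add: cinner_def)
  have inv: "H *v z \<in> S" if "z \<in> S" for z
  proof -
    { fix j assume j: "j \<in> F"
      have "cinner (v j) (H *v z) = cinner (H *v v j) z" by (rule cinner_herm[OF h])
      also have "\<dots> = complex_of_real (m j) * cinner (v j) z" using vm j by (simp add: cinner_scale_left)
      also have "\<dots> = 0" using that j unfolding S_def by simp
      finally have "cinner (v j) (H *v z) = 0" . }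
    thus ?thesis unfolding S_def by blast
  qed
  have ne: "\<exists>y\<in>S. y \<noteq> 0"
  proof -
    define G where "G = v ` F \<union> (\<lambda>j. \<i> *s v j) ` F"
    have "F \<subset> UNIV" using insert(2) by blast
    hence "card F < CARD('d)" by (rule psubset_card_mono[rotated]) simp
    moreover have "card G \<le> 2 * card F"
    proof -
      have "card G \<le> card (v ` F) + card ((\<lambda>j. \<i> *s v j) ` F)" unfolding G_def by (rule card_Un_le)
      also have "\<dots> \<le> card F + card F" by (intro add_mono card_image_le insert(1))
      finally show ?thesis by simp
    qed
    moreover have "dim G \<le> card G" using insert(1) unfolding G_def by (intro dim_le_card') auto
    ultimately have "dim G < DIM(complex^'d)" by simp
    then obtain a :: "complex^'d" where a: "a \<noteq> 0" "span G \<subseteq> {x. a \<bullet> x = 0}"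
      using lowdim_subset_hyperplane by blast
    have "\<forall>j\<in>F. cinner (v j) a = 0"
    proof
      fix j assume "j \<in> F"
      hence "v j \<in> G" "\<i> *s v j \<in> G" unfolding G_def by auto
      hence "a \<bullet> v j = 0" "a \<bullet> (\<i> *s v j) = 0" using a(2) span_base by blast+
      thus "cinner (v j) a = 0" by (simp add: cinner_eq0 inner_commute)
    qed
    hence "a \<in> S" unfolding S_def by blast
    thus ?thesis using a by blast
  qed
  have bil: "bilinear (inner :: complex^'d \<Rightarrow> _)"
    using bilinear_conv_bounded_bilinear bounded_bilinear_inner by blast
  have pos: "\<And>x::complex^'d. x \<noteq> 0 \<Longrightarrow> inner x x > 0" by simp
  obtain x \<mu> where x: "x \<in> S" "x \<noteq> 0" "H *v x = \<mu> *\<^sub>R x"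
    using rayleigh[OF bil inner_commute pos mv_linear herm_sa[OF h] sub inv ne] by blast
  define x' where "x' = (1 / norm x) *\<^sub>R x"
  have x'S: "x' \<in> S" unfolding x'_def using x sub by (simp add: subspace_scale)
  have Hx': "H *v x' = complex_of_real \<mu> *s x'"
  proof -
    have "H *v x' = (1 / norm x) *\<^sub>R (H *v x)" unfolding x'_def by (rule linear_cmul[OF mv_linear])
    also have "\<dots> = \<mu> *\<^sub>R x'" unfolding x(3) x'_def by simp
    finally show ?thesis by (simp add: scaleR_vs)
  qed
  have nx': "cinner x' x' = 1" unfolding cinner_self x'_def using x(2) by simp
  define v' where "v' = v(a := x')"
  define m' where "m' = m(a := \<mu>)"
  have orth1: "cinner (v j) x' = 0" if "j \<in> F" for j using x'S that unfolding S_def by blast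
  have orth2: "cinner x' (v j) = 0" if "j \<in> F" for j using orth1[OF that] cinner_cnj by (metis complex_cnj_zero)
  have A: "H *v v' j = complex_of_real (m' j) *s v' j" if "j \<in> insert a F" for j
  proof (cases "j = a")
    case True thus ?thesis using Hx' unfolding v'_def m'_def by simp
  next
    case False thus ?thesis using that vm unfolding v'_def m'_def by simp
  qed
  have B: "cinner (v' j) (v' k) = (if j = k then 1 else 0)" if j: "j \<in> insert a F" and k: "k \<in> insert a F" for j k
  proof (cases "j = a")
    case True
    show ?thesis
    proof (cases "k = a")
      case True thus ?thesis using \<open>j = a\<close> nx' unfolding v'_def by simp
    next
      case False
      hence "k \<in> F" using k by simp
      thus ?thesis using \<open>j = a\<close> False orth2 unfolding v'_def by simp
    qed
  next
    case False
    hence jF: "j \<in> F" using j by simp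
    show ?thesis
    proof (cases "k = a")
      case True thus ?thesis using False jF orth1 unfolding v'_def by simp
    next
      case False
      hence "k \<in> F" using k by simp
      thus ?thesis using \<open>j \<noteq> a\<close> False jF vm unfolding v'_def by simp
    qed
  qed
  show ?case using A B by blast
qed

lemma hermitian_decomp:
  fixes H :: "complex^'d::finite^'d"
  assumes h: "hermitian H"
  shows "\<exists>U D. qunitary U \<and> H = U ** diagm (\<lambda>i. complex_of_real (D i)) ** cadj U"
proof -
  obtain v :: "'d \<Rightarrow> complex^'d" and m :: "'d \<Rightarrow> real" where vm: "\<forall>j\<in>UNIV. H *v v j = complex_of_real (m j) *s v j \<and>
                (\<forall>k\<in>UNIV. cinner (v j) (v k) = (if j = k then 1 else 0))"
    using hermitian_eigvecs[OF h finite] by blast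
  define U :: "complex^'d^'d" where "U = (\<chi> i j. v j $ i)"
  have ent: "(cadj U ** U) $ j $ k = cinner (v j) (v k)" for j k
    by (simp add: U_def cadj_def matrix_matrix_mult_def cinner_def)
  have un: "cadj U ** U = mat 1"
    unfolding vec_eq_iff ent using vm by (simp add: mat_def)
  hence un2: "U ** cadj U = mat 1" using matrix_left_right_inverse by blast
  have HU: "H ** U = U ** diagm (\<lambda>i. complex_of_real (m i))"
  proof -
    { fix i k
      have "(H ** U) $ i $ k = (H *v v k) $ i"
        by (simp add: U_def matrix_matrix_mult_def matrix_vector_mult_def)
      also have "\<dots> = complex_of_real (m k) * v k $ i" using vm by simp
      also have "\<dots> = (U ** diagm (\<lambda>i. complex_of_real (m i))) $ i $ k"
        by (simp add: U_def matrix_matrix_mult_def diagm_def if_distrib if_distribR sum.delta' cong: if_cong)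
      finally have "(H ** U) $ i $ k = (U ** diagm (\<lambda>i. complex_of_real (m i))) $ i $ k" . }
    thus ?thesis by (simp add: vec_eq_iff)
  qed
  have "H = H ** (U ** cadj U)" using un2 by simp
  also have "\<dots> = U ** diagm (\<lambda>i. complex_of_real (m i)) ** cadj U" by (simp add: matrix_mul_assoc HU)
  finally show ?thesis using un unfolding qunitary_def by blast
qed

lemma cadj_cadj[simp]: "cadj (cadj A) = A"
  by (simp add: cadj_def vec_eq_iff)

lemma cadj_mult: "cadj (A ** B) = cadj B ** (cadj A :: complex^'d::finite^'d)"
  by (simp add: cadj_def matrix_matrix_mult_def vec_eq_iff mult.commute)

lemma cadj_mat1[simp]: "cadj (mat 1 :: complex^'d::finite^'d) = mat 1"
  by (simp add: cadj_def mat_def vec_eq_iff)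

lemma trace_diagm: "trace (diagm f) = sum f UNIV"
  by (simp add: diagm_def trace_def)

lemma diagm_one: "diagm (\<lambda>i. 1) = mat 1"
  by (simp add: diagm_def mat_def)

lemma matmul_diagm: "(A ** diagm g) $ i $ j = A$i$j * (g j :: complex)"
proof -
  have "(A ** diagm g) $ i $ j = (\<Sum>k\<in>UNIV. (if k = j then A$i$k * g k else 0))"
    unfolding matrix_matrix_mult_def diagm_def by (simp add: if_distrib cong: if_cong)
  also have "\<dots> = A$i$j * g j" by simp
  finally show ?thesis .
qed
lemma diagm_mult: "diagm f ** diagm g = diagm (\<lambda>i. f i * (g i :: complex))"
  unfolding vec_eq_iff matmul_diagm by (simp add: diagm_def)
lemma sandwich_entry: "(A ** diagm f ** B) $ i $ j = (\<Sum>k\<in>UNIV. A$i$k * f k * B$k$j)"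
  by (simp add: matrix_matrix_mult_def[of "A ** diagm f"] matmul_diagm)

lemma unitary_right: "qunitary U \<Longrightarrow> U ** cadj U = mat 1"
  unfolding qunitary_def using matrix_left_right_inverse by blast

lemma sandwich_mult:
  assumes "qunitary U"
  shows "(U ** diagm f ** cadj U) ** (U ** diagm g ** cadj U) = U ** diagm (\<lambda>i. f i * g i) ** cadj U"
proof -
  have "(U ** diagm f ** cadj U) ** (U ** diagm g ** cadj U) = U ** diagm f ** (cadj U ** U) ** diagm g ** cadj U"
    by (simp add: matrix_mul_assoc)
  also have "\<dots> = U ** diagm (\<lambda>i. f i * g i) ** cadj U"
    using assms by (simp add: qunitary_def matrix_mul_assoc[symmetric] diagm_mult)
  finally show ?thesis .
qed

lemma trace_sandwich:
  assumes "qunitary U"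
  shows "trace (U ** diagm f ** cadj U) = sum f UNIV"
proof -
  have "trace (U ** diagm f ** cadj U) = trace (cadj U ** (U ** diagm f))" by (rule trace_mul_sym)
  also have "\<dots> = trace (diagm f)" using assms by (simp add: qunitary_def matrix_mul_assoc)
  finally show ?thesis by (simp add: trace_diagm)
qed

lemma cscale_sandwich: "cscale c (U ** diagm f ** V) = U ** diagm (\<lambda>i. c * f i) ** V"
  by (simp add: cscale_def sandwich_entry vec_eq_iff sum_distrib_left mult_ac)

lemma cmod_sq_c: "(complex_of_real (cmod z))^2 = z * cnj z"
  by (metis complex_norm_square of_real_power)

lemma hfun_some:
  assumes "\<exists>U D. qunitary U \<and> A = U ** diagm (\<lambda>i. complex_of_real (D i)) ** cadj U"
  shows "\<exists>U D. qunitary U \<and> A = U ** diagm (\<lambda>i. complex_of_real (D i)) ** cadj U \<and>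
     (\<forall>f. hfun f A = U ** diagm (\<lambda>i. complex_of_real (f (D i))) ** cadj U)"
proof -
  define p where "p = (SOME p. qunitary (fst p) \<and>
                  A = fst p ** diagm (\<lambda>i. complex_of_real (snd p i)) ** cadj (fst p))"
  have "\<exists>p. qunitary (fst p) \<and> A = fst p ** diagm (\<lambda>i. complex_of_real (snd p i)) ** cadj (fst p)"
    using assms by auto
  hence pp: "qunitary (fst p) \<and> A = fst p ** diagm (\<lambda>i. complex_of_real (snd p i)) ** cadj (fst p)"
    unfolding p_def by (rule someI_ex)
  have "hfun f A = fst p ** diagm (\<lambda>i. complex_of_real (f (snd p i))) ** cadj (fst p)" for f
    unfolding hfun_def p_def[symmetric] by (simp add: case_prod_beta)
  thus ?thesis using pp by blast
qed

lemma rho_decomp: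
  fixes H :: "complex^'d::finite^'d"
  assumes h: "hermitian H"
  shows "\<exists>U d. qunitary U \<and> (\<forall>i. d i > 0) \<and>
     gibbs \<beta> H = U ** diagm (\<lambda>i. complex_of_real (d i)) ** cadj U \<and>
     (\<forall>t. mpowr (gibbs \<beta> H) t = U ** diagm (\<lambda>i. complex_of_real (d i powr t)) ** cadj U)"
proof -
  obtain U1 h1 where U1: "qunitary U1" and
    hf: "\<forall>f. hfun f H = U1 ** diagm (\<lambda>i. complex_of_real (f (h1 i))) ** cadj U1"
    using hfun_some[OF hermitian_decomp[OF h]] by blast
  define e where "e i = exp (- \<beta> * h1 i)" for i
  have epos: "e i > 0" for i by (simp add: e_def)
  define E where "E = hfun (\<lambda>x. exp (- \<beta> * x)) H"
  have E: "E = U1 ** diagm (\<lambda>i. complex_of_real (e i)) ** cadj U1" unfolding E_def e_def using hf by simp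
  have trE: "trace E = complex_of_real (sum e UNIV)" unfolding E trace_sandwich[OF U1] by simp
  define c where "c = inverse (sum e UNIV)"
  have spos: "sum e UNIV > 0" using epos by (simp add: sum_pos)
  hence cpos: "c > 0" by (simp add: c_def)
  define ce where "ce i = c * e i" for i
  have cepos: "ce i > 0" for i using cpos epos by (simp add: ce_def)
  have rho: "gibbs \<beta> H = U1 ** diagm (\<lambda>i. complex_of_real (ce i)) ** cadj U1"
    unfolding gibbs_def Let_def E_def[symmetric] trE unfolding E cscale_sandwich
    by (simp add: ce_def c_def inverse_eq_divide)
  have ex: "\<exists>U D. qunitary U \<and> gibbs \<beta> H = U ** diagm (\<lambda>i. complex_of_real (D i)) ** cadj U"
  proof (intro exI conjI)
    show "qunitary U1" by (rule U1)
    show "gibbs \<beta> H = U1 ** diagm (\<lambda>i. complex_of_real (ce i)) ** cadj U1" by (rule rho)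
  qed
  obtain U2 d where U2: "qunitary U2" and rho2: "gibbs \<beta> H = U2 ** diagm (\<lambda>i. complex_of_real (d i)) ** cadj U2"
    and hf2: "\<forall>f. hfun f (gibbs \<beta> H) = U2 ** diagm (\<lambda>i. complex_of_real (f (d i))) ** cadj U2"
    using hfun_some[OF ex] by blast
  define W where "W = cadj U2 ** U1"
  have WW: "W ** cadj W = mat 1"
  proof -
    have "W ** cadj W = cadj U2 ** (U1 ** cadj U1) ** U2" unfolding W_def cadj_mult by (simp add: matrix_mul_assoc)
    thus ?thesis using U2 unitary_right[OF U1] by (simp add: qunitary_def)
  qed
  have dpos: "d i > 0" for i
  proof -
    have "cadj U2 ** gibbs \<beta> H ** U2 = (cadj U2 ** U2) ** diagm (\<lambda>i. complex_of_real (d i)) ** (cadj U2 ** U2)"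
      unfolding rho2 by (simp add: matrix_mul_assoc)
    hence 1: "cadj U2 ** gibbs \<beta> H ** U2 = diagm (\<lambda>i. complex_of_real (d i))"
      using U2 by (simp add: qunitary_def)
    have 2: "cadj U2 ** gibbs \<beta> H ** U2 = W ** diagm (\<lambda>i. complex_of_real (ce i)) ** cadj W"
      unfolding rho W_def cadj_mult by (simp add: matrix_mul_assoc)
    have 3: "(diagm (\<lambda>i. complex_of_real (d i))) $ i $ i = complex_of_real (d i)" by (simp add: diagm_def)
    have "complex_of_real (d i) = (W ** diagm (\<lambda>i. complex_of_real (ce i)) ** cadj W) $ i $ i"
      using 1 2 3 by simp
    also have "\<dots> = (\<Sum>k\<in>UNIV. complex_of_real (ce k * (cmod (W$i$k))^2))"
      unfolding sandwich_entry by (simp add: cadj_def cmod_sq_c mult_ac)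
    finally have di: "d i = (\<Sum>k\<in>UNIV. ce k * (cmod (W$i$k))^2)"
      unfolding of_real_sum[symmetric] of_real_eq_iff .
    have "(\<Sum>k\<in>UNIV. complex_of_real ((cmod (W$i$k))^2)) = (W ** cadj W) $ i $ i"
      by (simp add: matrix_matrix_mult_def cadj_def cmod_sq_c)
    also have "\<dots> = 1" using WW by (simp add: mat_def)
    finally have "(\<Sum>k\<in>UNIV. (cmod (W$i$k))^2) = 1" unfolding of_real_sum[symmetric] of_real_eq_1_iff .
    then obtain k where "(cmod (W$i$k))^2 \<noteq> 0"
    proof -
      assume r: "\<And>k. (cmod (W$i$k))^2 \<noteq> 0 \<Longrightarrow> thesis" and s1: "(\<Sum>k\<in>UNIV. (cmod (W$i$k))^2) = 1"
      show thesis
      proof (rule ccontr)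
        assume "\<not> thesis"
        hence "\<forall>k. (cmod (W$i$k))^2 = 0" using r by blast
        hence "(\<Sum>k\<in>UNIV. (cmod (W$i$k))^2) = 0" by simp
        thus False using s1 by simp
      qed
    qed
    hence "(cmod (W$i$k))^2 > 0" by simp
    hence "ce k * (cmod (W$i$k))^2 > 0" using cepos by simp
    thus ?thesis unfolding di
      by (intro sum_pos2[where i=k]) (auto intro: mult_nonneg_nonneg less_imp_le[OF cepos])
  qed
  have "\<forall>t. mpowr (gibbs \<beta> H) t = U2 ** diagm (\<lambda>i. complex_of_real (d i powr t)) ** cadj U2"
    unfolding mpowr_def using hf2 by simp
  thus ?thesis using U2 dpos rho2 by (intro exI[where x=U2] exI[where x=d]) simp
qed

type_synonym 'd cm = "complex^'d^'d"

lemma sum_entry: "(sum f I) $ i $ j = (\<Sum>x\<in>I. (f x) $ i $ j)"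
  by (simp add: sum_component)

lemma cscale_entry: "cscale c A $ i $ j = c * A $ i $ j"
  by (simp add: cscale_def)

lemma cadj_entry: "cadj A $ i $ j = cnj (A $ j $ i)"
  by (simp add: cadj_def)

lemma matrix_add_rdistrib: "(A + B) ** C = A ** C + B ** (C :: 'd::finite cm)"
  by (simp add: vec_eq_iff matrix_matrix_mult_def distrib_right sum.distrib)

lemma cscale_add: "cscale c (A + B) = cscale c A + cscale c (B :: 'd::finite cm)"
  by (simp add: vec_eq_iff cscale_entry distrib_left)

lemma cscale_mult_left: "cscale c A ** B = cscale c (A ** (B :: 'd::finite cm))"
  by (simp add: vec_eq_iff cscale_entry matrix_matrix_mult_def sum_distrib_left mult.assoc)

lemma cscale_mult_right: "A ** cscale c B = cscale c (A ** (B :: 'd::finite cm))"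
  by (simp add: vec_eq_iff cscale_entry matrix_matrix_mult_def sum_distrib_left mult_ac)

lemma cscale_cscale: "cscale a (cscale b X) = cscale (a * b) (X :: 'd::finite cm)"
  by (simp add: vec_eq_iff cscale_entry mult.assoc)

lemma cscale_one[simp]: "cscale 1 X = (X :: 'd::finite cm)"
  by (simp add: vec_eq_iff cscale_entry)

lemma cscale_zero[simp]: "cscale 0 X = (0 :: 'd::finite cm)"
  by (simp add: vec_eq_iff cscale_entry)

lemma scaleR_cscale: "r *\<^sub>R X = cscale (complex_of_real r) (X :: 'd::finite cm)"
  unfolding vec_eq_iff cscale_entry by (simp only: vector_scaleR_component) (simp add: scaleR_conv_of_real)

lemma cadj_add: "cadj (A + B) = cadj A + cadj (B :: 'd::finite cm)"
  by (simp add: vec_eq_iff cadj_entry)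

lemma cadj_cscale: "cadj (cscale c A) = cscale (cnj c) (cadj (A :: 'd::finite cm))"
  by (simp add: vec_eq_iff cadj_entry cscale_entry)

lemma cadj_sum: "cadj (sum f I) = (\<Sum>x\<in>I. cadj (f x :: 'd::finite cm))"
  by (simp add: vec_eq_iff cadj_entry sum_entry)

lemma cscale_sum: "cscale c (sum f I) = (\<Sum>x\<in>I. cscale c (f x :: 'd::finite cm))"
  by (simp add: vec_eq_iff cscale_entry sum_entry sum_distrib_left)

lemma matrix_sum_left: "(sum f I) ** B = (\<Sum>x\<in>I. f x ** (B :: 'd::finite cm))"
proof -
  have "((sum f I) ** B) $ i $ j = (\<Sum>x\<in>I. f x ** B) $ i $ j" for i j
    unfolding sum_entry matrix_matrix_mult_def
    by (simp add: sum_entry sum_distrib_right) (rule sum.swap)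
  thus ?thesis by (simp add: vec_eq_iff)
qed

lemma matrix_sum_right: "B ** (sum f I) = (\<Sum>x\<in>I. B ** (f x :: 'd::finite cm))"
proof -
  have "(B ** (sum f I)) $ i $ j = (\<Sum>x\<in>I. B ** f x) $ i $ j" for i j
    unfolding sum_entry matrix_matrix_mult_def
    by (simp add: sum_entry sum_distrib_left) (rule sum.swap)
  thus ?thesis by (simp add: vec_eq_iff)
qed

lemma trace_cscale: "trace (cscale c (A :: 'd::finite cm)) = c * trace A"
  by (simp add: trace_def cscale_entry sum_distrib_left)

lemma trace_sum: "trace (sum f I) = (\<Sum>x\<in>I. trace (f x :: 'd::finite cm))"
  by (simp add: trace_def sum_entry) (rule sum.swap)

lemma sinner_alt: "sinner s \<rho> A B = trace (cadj A ** (mpowr \<rho> (1 - s) ** B ** mpowr \<rho> s))"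
  unfolding sinner_def by (simp add: matrix_mul_assoc)

lemma sinner_add_right: "sinner s \<rho> A (B1 + B2) = sinner s \<rho> A B1 + sinner s \<rho> A B2"
  unfolding sinner_def by (simp add: matrix_add_ldistrib matrix_add_rdistrib trace_add)

lemma sinner_cscale_right: "sinner s \<rho> A (cscale c B) = c * sinner s \<rho> A B"
  unfolding sinner_def by (simp add: cscale_mult_left cscale_mult_right trace_cscale)

lemma sinner_sum_right: "sinner s \<rho> A (sum f I) = (\<Sum>x\<in>I. sinner s \<rho> A (f x))"
  unfolding sinner_def by (simp add: matrix_sum_left matrix_sum_right trace_sum)

lemma sinner_add_left: "sinner s \<rho> (A1 + A2) B = sinner s \<rho> A1 B + sinner s \<rho> A2 B"
  unfolding sinner_def by (simp add: cadj_add matrix_add_rdistrib trace_add)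

lemma sinner_cscale_left: "sinner s \<rho> (cscale c A) B = cnj c * sinner s \<rho> A B"
  unfolding sinner_def by (simp add: cadj_cscale cscale_mult_left trace_cscale)

lemma sinner_sum_left: "sinner s \<rho> (sum f I) B = (\<Sum>x\<in>I. sinner s \<rho> (f x) B)"
  unfolding sinner_def by (simp add: cadj_sum matrix_sum_left trace_sum)

lemma sinner_scaleR_right: "sinner s \<rho> A (r *\<^sub>R B) = of_real r * sinner s \<rho> A B"
  by (simp add: scaleR_cscale sinner_cscale_right)

lemma sinner_scaleR_left: "sinner s \<rho> (r *\<^sub>R A) B = of_real r * sinner s \<rho> A B"
  by (simp add: scaleR_cscale sinner_cscale_left)

lemma wkraus_adj_add: "wkraus_adj c K I (A + B) = wkraus_adj c K I A + wkraus_adj c K I B"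
  unfolding wkraus_adj_def by (simp add: matrix_add_ldistrib matrix_add_rdistrib cscale_add sum.distrib)

lemma wkraus_adj_cscale: "wkraus_adj c K I (cscale a A) = cscale a (wkraus_adj c K I A)"
  unfolding wkraus_adj_def by (simp add: cscale_mult_left cscale_mult_right cscale_cscale cscale_sum mult.commute)

lemma wkraus_add: "wkraus c K I (A + B) = wkraus c K I A + wkraus c K I B"
  unfolding wkraus_def by (simp add: matrix_add_ldistrib matrix_add_rdistrib cscale_add sum.distrib)

lemma wkraus_cscale: "wkraus c K I (cscale a A) = cscale a (wkraus c K I A)"
  unfolding wkraus_def by (simp add: cscale_mult_left cscale_mult_right cscale_cscale cscale_sum mult.commute)

lemma wkraus_adj_scaleR: "wkraus_adj c K I (r *\<^sub>R A) = r *\<^sub>R wkraus_adj c K I A"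
  by (simp add: scaleR_cscale wkraus_adj_cscale)

lemma wkraus_adj_linear: "linear (wkraus_adj c K I)"
  by (rule linearI) (simp_all add: wkraus_adj_add wkraus_adj_scaleR)

lemma wkraus_adj_cadj: "cadj (wkraus_adj c K I A) = wkraus_adj c K I (cadj A)"
  unfolding wkraus_adj_def by (simp add: cadj_sum cadj_cscale cadj_mult matrix_mul_assoc)

lemma trace_dual: "trace (X ** wkraus_adj c K I B) = trace (wkraus c K I X ** B)"
proof -
  have "trace (X ** wkraus_adj c K I B) = (\<Sum>u\<in>I. complex_of_real (c u) * trace (X ** (cadj (K u) ** B ** K u)))"
    unfolding wkraus_adj_def by (simp add: matrix_sum_right trace_sum cscale_mult_right trace_cscale)
  also have "\<dots> = (\<Sum>u\<in>I. complex_of_real (c u) * trace ((K u ** X ** cadj (K u)) ** B))"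
  proof (intro sum.cong refl arg_cong[where f="\<lambda>z. _ * z"])
    fix u
    have "trace (X ** (cadj (K u) ** B ** K u)) = trace ((X ** cadj (K u) ** B) ** K u)" by (simp add: matrix_mul_assoc)
    also have "\<dots> = trace (K u ** (X ** cadj (K u) ** B))" by (rule trace_mul_sym)
    also have "\<dots> = trace ((K u ** X ** cadj (K u)) ** B)" by (simp add: matrix_mul_assoc)
    finally show "trace (X ** (cadj (K u) ** B ** K u)) = trace ((K u ** X ** cadj (K u)) ** B)" .
  qed
  also have "\<dots> = trace (wkraus c K I X ** B)"
    unfolding wkraus_def by (simp add: matrix_sum_left trace_sum cscale_mult_left trace_cscale)
  finally show ?thesis .
qed

lemma trace_ext:
  fixes A C :: "'d::finite cm"
  assumes "\<And>B. trace (A ** B) = trace (C ** B)"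
  shows "A = C"
proof -
  have key: "trace (X ** (\<chi> k l. if k = j \<and> l = i then 1 else 0)) = X $ i $ j" for X :: "'d cm" and i j
  proof -
    have "trace (X ** (\<chi> k l. if k = j \<and> l = i then 1 else 0)) =
        (\<Sum>a\<in>UNIV. \<Sum>k\<in>UNIV. X$a$k * (if k = j \<and> a = i then 1 else 0))"
      by (simp add: trace_def matrix_matrix_mult_def)
    also have "\<dots> = (\<Sum>a\<in>UNIV. if a = i then X$i$j else 0)"
    proof (intro sum.cong refl)
      fix a
      show "(\<Sum>k\<in>UNIV. X$a$k * (if k = j \<and> a = i then 1 else 0)) = (if a = i then X$i$j else 0)"
      proof (cases "a = i")
        case True
        have "(\<Sum>k\<in>UNIV. X$a$k * (if k = j \<and> a = i then 1 else 0)) = (\<Sum>k\<in>UNIV. if k = j then X$a$k else 0)"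
          using True by (intro sum.cong refl) simp
        also have "\<dots> = X$a$j" by (simp add: sum.delta)
        finally show ?thesis using True by simp
      next
        case False thus ?thesis by simp
      qed
    qed
    also have "\<dots> = X$i$j" by (simp add: sum.delta)
    finally show ?thesis .
  qed
  show ?thesis using assms key by (simp add: vec_eq_iff) metis
qed

lemma cs_real:
  fixes psi :: "'v::real_vector \<Rightarrow> 'v \<Rightarrow> real"
  assumes bil: "bilinear psi" and sym: "\<And>x y. psi x y = psi y x" and psd: "\<And>x. psi x x \<ge> 0"
  shows "(psi a w)^2 \<le> psi a a * psi w w"
proof -
  have exp: "psi (a + t *\<^sub>R w) (a + t *\<^sub>R w) = psi a a + 2 * t * psi a w + t^2 * psi w w" for t
    using bilinear_ladd[OF bil] bilinear_radd[OF bil] bilinear_lmul[OF bil] bilinear_rmul[OF bil] sym[of w a]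
    by (simp add: power2_eq_square algebra_simps)
  have q: "0 \<le> psi a a + 2 * t * psi a w + t^2 * psi w w" for t using psd[of "a + t *\<^sub>R w"] exp by simp
  show ?thesis
  proof (cases "psi w w = 0")
    case True
    have "psi a w = 0"
    proof (rule ccontr)
      assume ne: "psi a w \<noteq> 0"
      have "0 \<le> psi a a + 2 * (- (psi a a + 1) / (2 * psi a w)) * psi a w"
        using q[of "- (psi a a + 1) / (2 * psi a w)"] True by simp
      also have "\<dots> = -1" using ne by (simp add: field_simps)
      finally show False by simp
    qed
    thus ?thesis using True by simp
  next
    case False
    hence wp: "psi w w > 0" using psd[of w] by simp
    define t where "t = - psi a w / psi w w"
    have "0 \<le> psi a a + 2 * t * psi a w + t^2 * psi w w" by (rule q)
    also have "\<dots> = psi a a - (psi a w)^2 / psi w w" unfolding t_def using wp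
      by (simp add: field_simps power2_eq_square)
    finally have "(psi a w)^2 / psi w w \<le> psi a a" by simp
    thus ?thesis using wp by (simp add: divide_le_eq mult.commute)
  qed
qed

lemma covM_trace:
  "covM \<rho> Ob U = trace (\<rho> ** Mhat_adj \<rho> Ob U (Mhat_adj \<rho> Ob U (mat 1)))"
proof -
  define w where "w x = x - expM \<rho> Ob U" for x
  have cyc: "trace (Ob y ** Ob x ** \<rho> ** cadj (Ob x) ** cadj (Ob y)) =
             trace (\<rho> ** (cadj (Ob x) ** (cadj (Ob y) ** Ob y) ** Ob x))" for x y
  proof -
    have "trace (Ob y ** Ob x ** \<rho> ** cadj (Ob x) ** cadj (Ob y)) =
          trace ((Ob y ** Ob x) ** (\<rho> ** cadj (Ob x) ** cadj (Ob y)))" by (simp add: matrix_mul_assoc)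
    also have "\<dots> = trace ((\<rho> ** cadj (Ob x) ** cadj (Ob y)) ** (Ob y ** Ob x))" by (rule trace_mul_sym)
    also have "\<dots> = trace (\<rho> ** (cadj (Ob x) ** (cadj (Ob y) ** Ob y) ** Ob x))" by (simp add: matrix_mul_assoc)
    finally show ?thesis .
  qed
  have "trace (\<rho> ** Mhat_adj \<rho> Ob U (Mhat_adj \<rho> Ob U (mat 1))) =
    (\<Sum>x\<in>U. complex_of_real (w x) * trace (\<rho> ** (cadj (Ob x) ** Mhat_adj \<rho> Ob U (mat 1) ** Ob x)))"
    unfolding Mhat_adj_def[of \<rho> Ob U] wkraus_adj_def[of _ Ob U "wkraus_adj _ Ob U (mat 1)"] w_def[symmetric]
    by (simp add: matrix_sum_right trace_sum cscale_mult_right trace_cscale)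
  also have "\<dots> = (\<Sum>x\<in>U. complex_of_real (w x) * (\<Sum>y\<in>U. complex_of_real (w y) *
       trace (\<rho> ** (cadj (Ob x) ** (cadj (Ob y) ** Ob y) ** Ob x))))"
    unfolding Mhat_adj_def[of \<rho> Ob U] wkraus_adj_def[of _ Ob U "mat 1"] w_def[symmetric]
    by (simp add: matrix_sum_right matrix_sum_left trace_sum cscale_mult_right cscale_mult_left trace_cscale)
  also have "\<dots> = covM \<rho> Ob U"
    unfolding covM_def w_def[symmetric] cyc
    by (simp add: sum_distrib_left mult.assoc)
  finally show ?thesis by simp
qed

theorem lemma5p4:
  fixes n :: nat and \<beta> s :: real
    and H :: "complex^'d::finite^'d"
    and K :: "'k \<Rightarrow> complex^'d^'d" and J :: "'k set"
    and Ob :: "real \<Rightarrow> complex^'d^'d" and U :: "real set"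
    and Y :: "nat \<Rightarrow> complex^'d^'d" and lam :: "nat \<Rightarrow> real"
  defines "\<rho> \<equiv> gibbs \<beta> H"
  defines "D \<equiv> CARD('d)^2"
  defines "Edag \<equiv> kraus_adj Ob U \<circ> kraus_adj K J \<circ> kraus_adj Ob U"
  defines "Ehatdag \<equiv> Mhat_adj \<rho> Ob U \<circ> kraus_adj K J \<circ> kraus_adj Ob U"
  defines "\<alpha> \<equiv> (\<lambda>i j. sinner s \<rho> (Y j) (Ehatdag (Y i)))"
  assumes dim: "CARD('d) = 2^n"
    and herm: "hermitian H"
    and beta: "\<beta> > 0"
    and N_channel: "is_channel K J"
    and N_db: "detailed_balance s \<rho> (kraus_adj K J)"
    and N_fix: "kraus K J \<rho> = \<rho>"
    and N_unique: "\<forall>\<sigma>. density \<sigma> \<and> kraus K J \<sigma> = \<sigma> \<longrightarrow> \<sigma> = \<rho>"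
    and N_spec: "\<forall>\<mu> X. X \<noteq> 0 \<and> kraus K J X = cscale \<mu> X \<longrightarrow>
                   \<mu> \<in> \<real> \<and> 0 \<le> Re \<mu> \<and> Re \<mu> \<le> 1"
    and M_channel: "is_channel Ob U"
    and M_db: "detailed_balance s \<rho> (kraus_adj Ob U)"
    and Mhat_db: "detailed_balance s \<rho> (Mhat_adj \<rho> Ob U)"
    and Y_orth: "\<forall>i<D. \<forall>j<D. sinner s \<rho> (Y i) (Y j) = (if i = j then 1 else 0)"
    and Y_span: "\<forall>X. \<exists>c. X = (\<Sum>i<D. cscale (c i) (Y i))"
    and Y_eig: "\<forall>i<D. Edag (Y i) = cscale (complex_of_real (lam i)) (Y i)"
    and Y_1: "Y 0 = mat 1"
    and lam_1: "lam 0 = 1"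
    and lam_gap: "\<forall>i. 0 < i \<and> i < D \<longrightarrow> lam i < 1"
    and lam_sorted: "\<forall>i j. 0 < i \<and> i \<le> j \<and> j < D \<longrightarrow> lam j \<le> lam i"
    and lam_nonneg: "\<forall>i<D. 0 \<le> lam i"
  shows "(\<Sum>j<D. cmod (\<alpha> 0 j * \<alpha> j 0)) \<le> Re (covM \<rho> Ob U)"
proof -
  let ?ip = "sinner s \<rho>"
  define P where "P = mpowr \<rho> (1 - s)"
  define Q where "Q = mpowr \<rho> s"
  define Nd where "Nd = kraus_adj K J"
  define Md where "Md = kraus_adj Ob U"
  define Mh where "Mh = Mhat_adj \<rho> Ob U"
  obtain Ur d where Ur: "qunitary Ur" and dpos: "\<forall>i. d i > 0"
    and rho_eq: "gibbs \<beta> H = Ur ** diagm (\<lambda>i. complex_of_real (d i)) ** cadj Ur"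
    and mp: "\<forall>t. mpowr (gibbs \<beta> H) t = Ur ** diagm (\<lambda>i. complex_of_real (d i powr t)) ** cadj Ur"
    using rho_decomp[OF herm, of \<beta>] by blast
  have Peq: "P = Ur ** diagm (\<lambda>i. complex_of_real (d i powr (1 - s))) ** cadj Ur"
    unfolding P_def \<rho>_def using mp by simp
  have Qeq: "Q = Ur ** diagm (\<lambda>i. complex_of_real (d i powr s)) ** cadj Ur"
    unfolding Q_def \<rho>_def using mp by simp
  have QP: "Q ** P = \<rho>"
  proof -
    have "Q ** P = Ur ** diagm (\<lambda>i. complex_of_real (d i powr s) * complex_of_real (d i powr (1 - s))) ** cadj Ur"
      unfolding Peq Qeq by (rule sandwich_mult[OF Ur])
    also have "(\<lambda>i. complex_of_real (d i powr s) * complex_of_real (d i powr (1 - s))) = (\<lambda>i. complex_of_real (d i))"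
    proof
      fix i
      have "d i powr s * d i powr (1 - s) = d i" using dpos[rule_format, of i] by (simp add: powr_add[symmetric])
      thus "complex_of_real (d i powr s) * complex_of_real (d i powr (1 - s)) = complex_of_real (d i)"
        by (metis of_real_mult)
    qed
    finally show ?thesis unfolding \<rho>_def rho_eq .
  qed
  define Qi where "Qi = Ur ** diagm (\<lambda>i. complex_of_real (d i powr (- s))) ** cadj Ur"
  define Pi where "Pi = Ur ** diagm (\<lambda>i. complex_of_real (d i powr (- (1 - s)))) ** cadj Ur"
  have QiQ: "Qi ** Q = mat 1"
  proof -
    have "Qi ** Q = Ur ** diagm (\<lambda>i. complex_of_real (d i powr (- s)) * complex_of_real (d i powr s)) ** cadj Ur"
      unfolding Qi_def Qeq by (rule sandwich_mult[OF Ur])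
    also have "(\<lambda>i. complex_of_real (d i powr (- s)) * complex_of_real (d i powr s)) = (\<lambda>i. 1)"
    proof
      fix i
      have "d i powr (- s) * d i powr s = 1" using dpos[rule_format, of i] by (simp add: powr_add[symmetric])
      thus "complex_of_real (d i powr (- s)) * complex_of_real (d i powr s) = 1" by (metis of_real_mult of_real_1)
    qed
    finally show ?thesis using unitary_right[OF Ur] by (simp add: diagm_one)
  qed
  have PPi: "P ** Pi = mat 1"
  proof -
    have "P ** Pi = Ur ** diagm (\<lambda>i. complex_of_real (d i powr (1 - s)) * complex_of_real (d i powr (- (1 - s)))) ** cadj Ur"
      unfolding Pi_def Peq by (rule sandwich_mult[OF Ur])
    also have "(\<lambda>i. complex_of_real (d i powr (1 - s)) * complex_of_real (d i powr (- (1 - s)))) = (\<lambda>i. 1)"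
    proof
      fix i
      have "d i powr (1 - s) * d i powr (- (1 - s)) = 1" using dpos[rule_format, of i] by (simp add: powr_add[symmetric])
      thus "complex_of_real (d i powr (1 - s)) * complex_of_real (d i powr (- (1 - s))) = 1" by (metis of_real_mult of_real_1)
    qed
    finally show ?thesis using unitary_right[OF Ur] by (simp add: diagm_one)
  qed
  have ipdef: "?ip A B = trace (cadj A ** P ** B ** Q)" for A B
    unfolding sinner_def P_def Q_def ..
  have sinner_I: "?ip (mat 1) Z = trace (\<rho> ** Z)" for Z
  proof -
    have "?ip (mat 1) Z = trace ((P ** Z) ** Q)" unfolding ipdef by simp
    also have "\<dots> = trace (Q ** (P ** Z))" by (rule trace_mul_sym)
    also have "\<dots> = trace (\<rho> ** Z)" using QP by (simp add: matrix_mul_assoc)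
    finally show ?thesis .
  qed
  define co where "co i X = ?ip (Y i) X" for i X
  have ipY: "i < D \<Longrightarrow> j < D \<Longrightarrow> ?ip (Y i) (Y j) = (if i = j then 1 else 0)" for i j
    using Y_orth by blast
  have expand: "X = (\<Sum>i<D. cscale (co i X) (Y i))" for X
  proof -
    obtain c where c: "X = (\<Sum>i<D. cscale (c i) (Y i))" using Y_span by blast
    have "co j X = c j" if "j < D" for j
    proof -
      have "co j X = (\<Sum>i<D. c i * ?ip (Y j) (Y i))"
        unfolding co_def by (subst c) (simp add: sinner_sum_right sinner_cscale_right)
      also have "\<dots> = (\<Sum>i<D. if i = j then c i else 0)"
        using that ipY by (intro sum.cong refl) auto
      also have "\<dots> = c j" using that by simp
      finally show ?thesis .
    qed
    hence "(\<Sum>i<D. cscale (co i X) (Y i)) = (\<Sum>i<D. cscale (c i) (Y i))" by simp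
    thus ?thesis using c by simp
  qed
  have parseval: "?ip X Z = (\<Sum>i<D. cnj (co i X) * co i Z)" for X Z
  proof -
    have "?ip X Z = ?ip (\<Sum>i<D. cscale (co i X) (Y i)) Z" by (subst expand[of X]) simp
    also have "\<dots> = (\<Sum>i<D. cnj (co i X) * co i Z)"
      by (simp add: sinner_sum_left sinner_cscale_left co_def)
    finally show ?thesis .
  qed
  have ip_herm: "?ip Z X = cnj (?ip X Z)" for X Z
    unfolding parseval by (simp add: mult.commute)
  have ip_self: "Re (?ip X X) = (\<Sum>i<D. (cmod (co i X))^2)" for X
  proof -
    have "Re (cnj z * z) = (cmod z)^2" for z
      using complex_norm_square[of z] by (metis Re_complex_of_real mult.commute)
    thus ?thesis unfolding parseval by (simp add: Re_sum)
  qed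
  have ip_self_real: "?ip X X = complex_of_real (Re (?ip X X))" for X
    using ip_herm[of X X] by (metis Reals_cnj_iff complex_is_Real_iff of_real_Re)
  have ip_nonneg: "Re (?ip X X) \<ge> 0" for X unfolding ip_self by (simp add: sum_nonneg)
  have ip_pos: "X \<noteq> 0 \<Longrightarrow> Re (?ip X X) > 0" for X
  proof (rule ccontr)
    assume X0: "X \<noteq> 0" and "\<not> Re (?ip X X) > 0"
    hence "(\<Sum>i<D. (cmod (co i X))^2) = 0" using ip_nonneg[of X] unfolding ip_self by simp
    hence "\<forall>i\<in>{..<D}. (cmod (co i X))^2 = 0" by (subst (asm) sum_nonneg_eq_0_iff) auto
    hence "\<forall>i<D. co i X = 0" by simp
    hence "X = 0" using expand[of X] by simp
    thus False using X0 by simp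
  qed
  define g where "g X Z = Re (?ip X Z)" for X Z
  have g_bil: "bilinear g"
    unfolding bilinear_def g_def
    by (auto intro!: linearI simp: sinner_add_right sinner_add_left sinner_scaleR_right sinner_scaleR_left)
  have g_sym: "g X Z = g Z X" for X Z unfolding g_def ip_herm[of X Z] by simp
  have g_pos: "X \<noteq> 0 \<Longrightarrow> g X X > 0" for X unfolding g_def by (rule ip_pos)
  have Nd_lin: "linear Nd" unfolding Nd_def by (rule wkraus_adj_linear)
  have Nd_db: "?ip A (Nd B) = ?ip (Nd A) B" for A B
    using N_db unfolding detailed_balance_def Nd_def by blast
  have Nd_sa: "g X (Nd Z) = g (Nd X) Z" for X Z unfolding g_def Nd_db ..
  have Ndual: "kraus K J (Q ** W ** P) = Q ** Nd W ** P" for W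
  proof (rule trace_ext)
    fix B
    have "trace (kraus K J (Q ** W ** P) ** B) = trace ((Q ** W ** P) ** Nd B)"
      unfolding Nd_def by (rule trace_dual[symmetric])
    also have "\<dots> = trace (Q ** (W ** P ** Nd B))" by (simp add: matrix_mul_assoc)
    also have "\<dots> = trace ((W ** P ** Nd B) ** Q)" by (rule trace_mul_sym)
    also have "\<dots> = ?ip (cadj W) (Nd B)" unfolding ipdef by simp
    also have "\<dots> = ?ip (Nd (cadj W)) B" by (rule Nd_db)
    also have "\<dots> = trace ((Nd W ** P ** B) ** Q)"
      unfolding ipdef Nd_def wkraus_adj_cadj by (simp add: matrix_mul_assoc)
    also have "\<dots> = trace (Q ** (Nd W ** P ** B))" by (rule trace_mul_sym)
    also have "\<dots> = trace ((Q ** Nd W ** P) ** B)" by (simp add: matrix_mul_assoc)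
    finally show "trace (kraus K J (Q ** W ** P) ** B) = trace ((Q ** Nd W ** P) ** B)" .
  qed
  have eig: "0 \<le> m \<and> m \<le> 1" if X0: "X \<noteq> 0" and ev: "Nd X = m *\<^sub>R X" for X m
  proof -
    have "kraus K J (Q ** X ** P) = cscale (complex_of_real m) (Q ** X ** P)"
      unfolding Ndual ev scaleR_cscale by (simp add: cscale_mult_left cscale_mult_right)
    moreover have "Q ** X ** P \<noteq> 0"
    proof
      assume "Q ** X ** P = 0"
      hence "Qi ** (Q ** X ** P) ** Pi = 0" by simp
      moreover have "Qi ** (Q ** X ** P) ** Pi = X"
      proof -
        have "Qi ** (Q ** X ** P) ** Pi = (Qi ** Q) ** X ** (P ** Pi)" by (simp add: matrix_mul_assoc)
        thus ?thesis using QiQ PPi by simp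
      qed
      ultimately show False using X0 by simp
    qed
    ultimately have "complex_of_real m \<in> \<real> \<and> 0 \<le> Re (complex_of_real m) \<and> Re (complex_of_real m) \<le> 1"
      using N_spec by blast
    thus ?thesis by simp
  qed
  have ne: "\<exists>y\<in>(UNIV :: (complex^'d^'d) set). y \<noteq> 0"
    by (rule bexI[of _ "mat 1"]) (auto simp: vec_eq_iff mat_def)
  have Nd_up: "g Z (Nd Z) \<le> g Z Z" for Z
  proof -
    obtain X m where X: "X \<noteq> 0" "Nd X = m *\<^sub>R X" and b: "\<forall>z\<in>UNIV. g z (Nd z) \<le> m * g z z"
      using rayleigh[OF g_bil g_sym g_pos Nd_lin Nd_sa subspace_UNIV _ ne] by blast
    have "m \<le> 1" using eig[OF X] by simp
    moreover have "g Z Z \<ge> 0" unfolding g_def by (rule ip_nonneg)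
    ultimately have "m * g Z Z \<le> g Z Z" using mult_right_mono[of m 1 "g Z Z"] by simp
    thus ?thesis using b by (meson UNIV_I order_trans)
  qed
  have negNd_lin: "linear (\<lambda>Z. - Nd Z)" using Nd_lin by (simp add: linear_compose_neg)
  have negNd_sa: "g X (- Nd Z) = g (- Nd X) Z" for X Z
    using bilinear_rneg[OF g_bil] bilinear_lneg[OF g_bil] Nd_sa by metis
  have Nd_low: "0 \<le> g Z (Nd Z)" for Z
  proof -
    obtain X m where X: "X \<noteq> 0" "- Nd X = m *\<^sub>R X" and b: "\<forall>z\<in>UNIV. g z (- Nd z) \<le> m * g z z"
      using rayleigh[OF g_bil g_sym g_pos negNd_lin negNd_sa subspace_UNIV _ ne] by blast
    have "Nd X = (- m) *\<^sub>R X" using X(2) by (metis minus_equation_iff scaleR_minus_left)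
    hence "0 \<le> - m" using eig[OF X(1)] by blast
    hence "m \<le> 0" by simp
    moreover have "g Z Z \<ge> 0" unfolding g_def by (rule ip_nonneg)
    ultimately have "m * g Z Z \<le> 0" by (simp add: mult_nonpos_nonneg)
    moreover have "g Z (- Nd Z) = - g Z (Nd Z)" using bilinear_rneg[OF g_bil] by metis
    ultimately show ?thesis using b[rule_format, of Z] by simp
  qed
  have Md_db: "?ip A (Md B) = ?ip (Md A) B" for A B
    using M_db unfolding detailed_balance_def Md_def by blast
  have Mh_db: "?ip A (Mh B) = ?ip (Mh A) B" for A B
    using Mhat_db unfolding detailed_balance_def Mh_def by blast
  have Md1: "Md (mat 1) = mat 1"
    using M_channel unfolding Md_def wkraus_adj_def is_channel_def by simp
  have Nd1: "Nd (mat 1) = mat 1"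
    using N_channel unfolding Nd_def wkraus_adj_def is_channel_def by simp
  have Edag_eq: "Edag X = Md (Nd (Md X))" for X unfolding Edag_def Md_def Nd_def by simp
  have Ehat_eq: "Ehatdag X = Mh (Nd (Md X))" for X unfolding Ehatdag_def Mh_def Md_def Nd_def by simp
  have E_sa: "?ip X (Edag Z) = ?ip (Edag X) Z" for X Z
    unfolding Edag_eq Md_db Nd_db by (simp add: Md_db[symmetric] Nd_db[symmetric])
  define A where "A = Mh (mat 1)"
  define B where "B = Md (Nd A)"
  have a0j: "\<alpha> 0 j = co j A" for j
    unfolding \<alpha>_def Ehat_eq Y_1 Md1 Nd1 co_def A_def ..
  have aj0: "\<alpha> j 0 = cnj (co j B)" for j
  proof -
    have "\<alpha> j 0 = ?ip (mat 1) (Mh (Nd (Md (Y j))))" unfolding \<alpha>_def Ehat_eq Y_1 ..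
    also have "\<dots> = ?ip A (Nd (Md (Y j)))" unfolding A_def by (rule Mh_db)
    also have "\<dots> = ?ip (Nd A) (Md (Y j))" by (rule Nd_db)
    also have "\<dots> = ?ip B (Y j)" unfolding B_def by (rule Md_db)
    also have "\<dots> = cnj (co j B)" unfolding co_def by (rule ip_herm)
    finally show ?thesis .
  qed
  define nA where "nA = Re (?ip A A)"
  define nB where "nB = Re (?ip B B)"
  have nA0: "nA \<ge> 0" unfolding nA_def by (rule ip_nonneg)
  have nB0: "nB \<ge> 0" unfolding nB_def by (rule ip_nonneg)
  have SC: "(\<Sum>j<D. cmod (\<alpha> 0 j * \<alpha> j 0)) \<le> sqrt nA * sqrt nB"
  proof -
    have "(\<Sum>j<D. cmod (\<alpha> 0 j * \<alpha> j 0)) = (\<Sum>j<D. \<bar>cmod (co j A)\<bar> * \<bar>cmod (co j B)\<bar>)"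
      unfolding a0j aj0 by (simp add: norm_mult)
    also have "\<dots> \<le> L2_set (\<lambda>j. cmod (co j A)) {..<D} * L2_set (\<lambda>j. cmod (co j B)) {..<D}"
      by (rule L2_set_mult_ineq)
    also have "\<dots> = sqrt nA * sqrt nB" unfolding L2_set_def nA_def nB_def ip_self ..
    finally show ?thesis .
  qed
  have Cov: "Re (covM \<rho> Ob U) = nA"
  proof -
    have "covM \<rho> Ob U = trace (\<rho> ** Mh (Mh (mat 1)))" unfolding Mh_def by (rule covM_trace)
    also have "\<dots> = ?ip (mat 1) (Mh A)" unfolding sinner_I A_def ..
    also have "\<dots> = ?ip A A" unfolding Mh_db A_def ..
    finally show ?thesis unfolding nA_def by simp
  qed
  have lam01: "0 \<le> lam i \<and> lam i \<le> 1" if "i < D" for i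
    using that lam_nonneg lam_gap lam_1 by (cases "i = 0") (auto intro: less_imp_le)
  have coE: "co i (Edag X) = complex_of_real (lam i) * co i X" if "i < D" for i X
  proof -
    have "co i (Edag X) = ?ip (Edag (Y i)) X" unfolding co_def by (rule E_sa)
    also have "\<dots> = complex_of_real (lam i) * co i X"
      using Y_eig that by (simp add: sinner_cscale_left co_def)
    finally show ?thesis .
  qed
  have Ebound: "Re (?ip X (Edag X)) \<le> Re (?ip X X)" for X
  proof -
    have "Re (?ip X (Edag X)) = (\<Sum>i<D. lam i * (cmod (co i X))^2)"
    proof -
      have "?ip X (Edag X) = (\<Sum>i<D. complex_of_real (lam i) * (cnj (co i X) * co i X))"
        unfolding parseval by (intro sum.cong refl) (simp add: coE mult_ac)
      moreover have "Re (cnj z * z) = (cmod z)^2" for z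
        using complex_norm_square[of z] by (metis Re_complex_of_real mult.commute)
      ultimately show ?thesis by (simp add: Re_sum)
    qed
    also have "\<dots> \<le> (\<Sum>i<D. (cmod (co i X))^2)"
      by (intro sum_mono) (use lam01 in \<open>auto intro: mult_left_le_one_le\<close>)
    also have "\<dots> = Re (?ip X X)" unfolding ip_self ..
    finally show ?thesis .
  qed
  define psi where "psi X Z = g X (Nd Z)" for X Z
  have psi_bil: "bilinear psi"
  proof -
    have l1: "linear (\<lambda>Z. g X Z)" for X using g_bil unfolding bilinear_def by blast
    have l2: "linear (\<lambda>X. g X Z)" for Z using g_bil unfolding bilinear_def by blast
    show ?thesis unfolding bilinear_def psi_def
      using linear_compose[OF Nd_lin l1] l2 by (simp add: o_def)
  qed
  have psi_sym: "psi X Z = psi Z X" for X Z unfolding psi_def by (metis g_sym Nd_sa)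
  have psi_psd: "psi X X \<ge> 0" for X unfolding psi_def by (rule Nd_low)
  define W where "W = Md B"
  have nB_psi: "nB = psi A W"
  proof -
    have "?ip B B = ?ip A (Nd (Md B))" unfolding B_def by (simp add: Md_db[symmetric] Nd_db[symmetric])
    thus ?thesis unfolding nB_def psi_def g_def W_def by simp
  qed
  have psiA: "psi A A \<le> nA" unfolding psi_def nA_def using Nd_up[of A] by (simp add: g_def)
  have psiW: "psi W W \<le> nB"
  proof -
    have "?ip W (Nd W) = ?ip B (Edag B)" unfolding W_def Edag_eq by (simp add: Md_db)
    thus ?thesis unfolding psi_def g_def nB_def using Ebound[of B] by simp
  qed
  have "nB^2 \<le> psi A A * psi W W" unfolding nB_psi by (rule cs_real[OF psi_bil psi_sym psi_psd])
  also have "\<dots> \<le> nA * nB" using psiA psiW psi_psd nA0 by (intro mult_mono) auto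
  finally have "nB^2 \<le> nA * nB" .
  hence nBA: "nB \<le> nA" using nB0 nA0 by (cases "nB = 0") (auto simp: power2_eq_square)
  have "sqrt nA * sqrt nB \<le> sqrt nA * sqrt nA" using nBA nA0 by (intro mult_left_mono) auto
  also have "\<dots> = nA" using nA0 by simp
  finally show ?thesis using SC Cov by simp
qed

end
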